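(* Fix a finite relational vocabulary $\sigma$ and integers $n,d\ge 0$. In the generalized core model structure on $\mathbf{STRUCT}[\sigma_n]_{(d,0)}^{\widetilde{\mathcal{T}(\sigma_n)}}$, any two morphisms $f,g:X\to Y$ with the same domain and the same codomain are homotopic.
   Context: Let $\sigma=\langle R_1,\dots,R_l\rangle$ be a finite relational vocabulary, $R_i$ of arity $p_i$, and $\sigma_n$ its expansion by $n$ constant symbols; all structures are finite. For a $\sigma$-structure $\mathfrak{A}$, its Gaifman graph has vertex set $A$ and an edge between $a,b$ iff both occur in a tuple of some $R_i^{\mathfrak{A}}$; $d(\cdot,\cdot)$ is shortest-path distance, $d(\vec a,b)=\min_i d(a_i,b)$, $B_d^{\mathfrak{A}}(\vec a)=\{b: d(\vec a,b)\le d\}$, and the $d$-neighborhood $N_d^{\mathfrak{A}}(\vec a)$ is the $\sigma_n$-structure on $B_d^{\mathfrak{A}}(\vec a)$ with relations $R_i^{\mathfrak{A}}\cap B_d^{\mathfrak{A}}(\vec a)^{p_i}$ and constants $a_1,\dots,a_n$. Homomorphisms of $d$-neighborhoods are relation-preserving maps of balls sending $a_i\mapsto b_i$. $\widetilde{\mathcal{T}(\sigma_n)}$ is the $\sigma_n$-structure whose universe is the set of closed $\sigma_n$-terms (the constant symbols), constants interpreted as themselves and all relations empty. The category $\mathbf{STRUCT}[\sigma_n]_{(d,0)}^{\widetilde{\mathcal{T}(\sigma_n)}}$ has objects the $d$-neighborhoods $N_d^{\mathfrak{A}}(\vec a)$, the $0$-neighborhoods $N_0^{\mathfrak{A}}(a)$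 and $\widetilde{\mathcal{T}(\sigma_n)}$; morphisms are homomorphisms of $d$-neighborhoods, the unique homomorphism $\widetilde{\mathcal{T}(\sigma_n)}\to N_d^{\mathfrak{A}}(\vec a)$, and the unique homomorphism $N_d^{\mathfrak{A}}(\vec a)\to N_0^{\mathfrak{A}}(a)$. Two objects are homomorphically equivalent if there are morphisms in both directions. The generalized core model structure (of Droz and Zakharevich) is the model structure in which a morphism $f:X\to Y$ is a weak equivalence iff $X$ and $Y$ are homomorphically equivalent, and the acyclic fibrations are exactly the retractions (morphisms $r$ with $r\circ s=\mathrm{id}$ for some $s$); cofibrations are the morphisms with the left lifting property w.r.t. retractions and fibrations those with the right lifting property w.r.t. acyclic cofibrations. "Homotopic" refers to left (equivalently right) homotopy in this model structure. *)

theory Defs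
  imports "HOL-Library.FuncSet"
begin

text \<open>Finite relational vocabulary sigma = list of arities ps (relation symbol R_i has
arity ps ! i, i < length ps).  Structures are represented on the carrier type nat
(every finite structure is isomorphic to one on nat).\<close>

record struc =
  univ :: "nat set"
  rels :: "nat \<Rightarrow> nat list set"
  cs   :: "nat list"

definition sigma_struct :: "nat list \<Rightarrow> struc \<Rightarrow> bool" where
  "sigma_struct ps A \<longleftrightarrow> finite (univ A) \<and> univ A \<noteq> {} \<and>
     (\<forall>i < length ps. rels A i \<subseteq> {t. length t = ps ! i \<and> set t \<subseteq> univ A}) \<and>
     (\<forall>i. length ps \<le> i \<longrightarrow> rels A i = {}) \<and> cs A = []"

definition gedge :: "nat list \<Rightarrow> struc \<Rightarrow> (nat \<times> nat) set" where
  "gedge ps A = {(a, b). \<exists>i < length ps. \<exists>t \<in> rels A i. a \<in> set t \<and> b \<in> set t}"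

definition within :: "nat list \<Rightarrow> struc \<Rightarrow> nat \<Rightarrow> nat \<Rightarrow> nat \<Rightarrow> bool" where
  "within ps A k a b \<longleftrightarrow> (\<exists>j \<le> k. (a, b) \<in> (gedge ps A) ^^ j)"

definition ball :: "nat list \<Rightarrow> struc \<Rightarrow> nat \<Rightarrow> nat list \<Rightarrow> nat set" where
  "ball ps A k as = {b \<in> univ A. \<exists>a \<in> set as. within ps A k a b}"

definition nbhd :: "nat list \<Rightarrow> struc \<Rightarrow> nat \<Rightarrow> nat list \<Rightarrow> struc" where
  "nbhd ps A k as = \<lparr>univ = ball ps A k as,
     rels = (\<lambda>i. {t \<in> rels A i. set t \<subseteq> ball ps A k as}), cs = as\<rparr>"

definition is_nbhd :: "nat list \<Rightarrow> nat \<Rightarrow> nat \<Rightarrow> struc \<Rightarrow> bool" where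
  "is_nbhd ps n k S \<longleftrightarrow> (\<exists>A as. sigma_struct ps A \<and> length as = n \<and> set as \<subseteq> univ A \<and>
       S = nbhd ps A k as)"

text \<open>The term structure: universe = the n constant symbols (coded as 0..n-1),
constants interpreted as themselves, all relations empty.\<close>
definition Tterm :: "nat \<Rightarrow> struc" where
  "Tterm n = \<lparr>univ = {0..<n}, rels = (\<lambda>_. {}), cs = [0..<n]\<rparr>"

text \<open>Objects of the category are tagged: (True, Tterm n) is the term structure,
(False, S) a neighborhood (d-neighborhood or 0-neighborhood).\<close>
type_synonym obj = "bool \<times> struc"

definition Ob :: "nat list \<Rightarrow> nat \<Rightarrow> nat \<Rightarrow> obj \<Rightarrow> bool" where
  "Ob ps n d X \<longleftrightarrow> X = (True, Tterm n) \<or>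
     (\<not> fst X \<and> (is_nbhd ps n d (snd X) \<or> is_nbhd ps n 0 (snd X)))"

definition is_hom :: "struc \<Rightarrow> struc \<Rightarrow> (nat \<Rightarrow> nat) \<Rightarrow> bool" where
  "is_hom S T f \<longleftrightarrow> f \<in> univ S \<rightarrow>\<^sub>E univ T \<and>
     (\<forall>i. \<forall>t \<in> rels S i. map f t \<in> rels T i) \<and> map f (cs S) = cs T"

definition idm :: "obj \<Rightarrow> (nat \<Rightarrow> nat)" where
  "idm X = (\<lambda>x \<in> univ (snd X). x)"

definition cmp :: "obj \<Rightarrow> (nat \<Rightarrow> nat) \<Rightarrow> (nat \<Rightarrow> nat) \<Rightarrow> (nat \<Rightarrow> nat)" where
  "cmp X g f = (\<lambda>x \<in> univ (snd X). g (f x))"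

definition Mor :: "nat list \<Rightarrow> nat \<Rightarrow> nat \<Rightarrow> obj \<Rightarrow> obj \<Rightarrow> (nat \<Rightarrow> nat) \<Rightarrow> bool" where
  "Mor ps n d X Y f \<longleftrightarrow> Ob ps n d X \<and> Ob ps n d Y \<and> is_hom (snd X) (snd Y) f \<and>
     ((X = Y \<and> f = idm X) \<or> fst X \<or>
      (\<not> fst X \<and> \<not> fst Y \<and> is_nbhd ps n d (snd X) \<and>
        (is_nbhd ps n d (snd Y) \<or> is_nbhd ps n 0 (snd Y))))"

definition weq :: "nat list \<Rightarrow> nat \<Rightarrow> nat \<Rightarrow> obj \<Rightarrow> obj \<Rightarrow> (nat \<Rightarrow> nat) \<Rightarrow> bool" where
  "weq ps n d X Y f \<longleftrightarrow> Mor ps n d X Y f \<and> (\<exists>g. Mor ps n d Y X g)"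

definition retraction :: "nat list \<Rightarrow> nat \<Rightarrow> nat \<Rightarrow> obj \<Rightarrow> obj \<Rightarrow> (nat \<Rightarrow> nat) \<Rightarrow> bool" where
  "retraction ps n d X Y r \<longleftrightarrow> Mor ps n d X Y r \<and>
     (\<exists>s. Mor ps n d Y X s \<and> cmp Y r s = idm Y)"

definition cofibration :: "nat list \<Rightarrow> nat \<Rightarrow> nat \<Rightarrow> obj \<Rightarrow> obj \<Rightarrow> (nat \<Rightarrow> nat) \<Rightarrow> bool" where
  "cofibration ps n d A B i \<longleftrightarrow> Mor ps n d A B i \<and>
     (\<forall>E P p u v. retraction ps n d E P p \<and> Mor ps n d A E u \<and> Mor ps n d B P v \<and>
        cmp A p u = cmp A v i \<longrightarrow>
        (\<exists>h. Mor ps n d B E h \<and> cmp A h i = u \<and> cmp B p h = v))"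

definition fibration :: "nat list \<Rightarrow> nat \<Rightarrow> nat \<Rightarrow> obj \<Rightarrow> obj \<Rightarrow> (nat \<Rightarrow> nat) \<Rightarrow> bool" where
  "fibration ps n d E P p \<longleftrightarrow> Mor ps n d E P p \<and>
     (\<forall>A B i u v. cofibration ps n d A B i \<and> weq ps n d A B i \<and> Mor ps n d A E u \<and>
        Mor ps n d B P v \<and> cmp A p u = cmp A v i \<longrightarrow>
        (\<exists>h. Mor ps n d B E h \<and> cmp A h i = u \<and> cmp B p h = v))"

text \<open>The map [i0,i1] : X + X \<rightarrow> C is a cofibration, phrased via the universal property
of the coproduct (left lifting property against all retractions).\<close>
definition pair_cofibration ::
  "nat list \<Rightarrow> nat \<Rightarrow> nat \<Rightarrow> obj \<Rightarrow> obj \<Rightarrow> (nat \<Rightarrow> nat) \<Rightarrow> (nat \<Rightarrow> nat) \<Rightarrow> bool" where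
  "pair_cofibration ps n d X C i0 i1 \<longleftrightarrow> Mor ps n d X C i0 \<and> Mor ps n d X C i1 \<and>
     (\<forall>E P p u0 u1 v. retraction ps n d E P p \<and> Mor ps n d X E u0 \<and> Mor ps n d X E u1 \<and>
        Mor ps n d C P v \<and> cmp X p u0 = cmp X v i0 \<and> cmp X p u1 = cmp X v i1 \<longrightarrow>
        (\<exists>h. Mor ps n d C E h \<and> cmp X h i0 = u0 \<and> cmp X h i1 = u1 \<and> cmp C p h = v))"

text \<open>Left homotopy via a cylinder object (Hovey): X + X \<rightarrow> C cofibration, C \<rightarrow> X weak
equivalence composing to the fold map, and a homotopy H : C \<rightarrow> Y.\<close>
definition left_homotopic ::
  "nat list \<Rightarrow> nat \<Rightarrow> nat \<Rightarrow> obj \<Rightarrow> obj \<Rightarrow> (nat \<Rightarrow> nat) \<Rightarrow> (nat \<Rightarrow> nat) \<Rightarrow> bool" where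
  "left_homotopic ps n d X Y f g \<longleftrightarrow> Mor ps n d X Y f \<and> Mor ps n d X Y g \<and>
     (\<exists>C i0 i1 s H. pair_cofibration ps n d X C i0 i1 \<and> weq ps n d C X s \<and>
        cmp X s i0 = idm X \<and> cmp X s i1 = idm X \<and>
        Mor ps n d C Y H \<and> cmp X H i0 = f \<and> cmp X H i1 = g)"

end

theory Submission
  imports Defs
begin

definition e0 :: "nat \<Rightarrow> nat" where "e0 x = 2*x"
definition e1 :: "nat list \<Rightarrow> nat \<Rightarrow> nat" where
  "e1 as x = (if x \<in> set as then 2*x else Suc (2*x))"

lemma e0_div[simp]: "e0 x div 2 = x" by (simp add: e0_def)
lemma e1_div[simp]: "e1 as x div 2 = x" by (simp add: e1_def)
lemma e0_even[simp]: "even (e0 x)" by (simp add: e0_def)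
lemma e1_even[simp]: "even (e1 as x) \<longleftrightarrow> x \<in> set as" by (simp add: e1_def)
lemma e1_as: "x \<in> set as \<Longrightarrow> e1 as x = e0 x" by (simp add: e1_def e0_def)

definition dbl :: "struc \<Rightarrow> nat list \<Rightarrow> struc" where
  "dbl A as = \<lparr>univ = e0 ` univ A \<union> e1 as ` univ A,
     rels = (\<lambda>i. map e0 ` rels A i \<union> map (e1 as) ` rels A i), cs = []\<rparr>"

lemma relpow_map:
  assumes "\<And>x y. (x,y) \<in> R \<Longrightarrow> (\<phi> x, \<phi> y) \<in> S"
  shows "(x,y) \<in> R ^^ j \<Longrightarrow> (\<phi> x, \<phi> y) \<in> S ^^ j"
proof (induction j arbitrary: y)
  case 0 then show ?case by simp
next
  case (Suc j)
  then obtain z where "(x,z) \<in> R ^^ j" "(z,y) \<in> R" by auto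
  then show ?case using Suc.IH assms by auto
qed

lemma within_map:
  assumes "\<And>x y. (x,y) \<in> gedge ps A \<Longrightarrow> (\<phi> x, \<phi> y) \<in> gedge ps B"
  shows "within ps A k x y \<Longrightarrow> within ps B k (\<phi> x) (\<phi> y)"
  using relpow_map[of "gedge ps A" \<phi> "gedge ps B", OF assms] unfolding within_def by blast

lemma sigma_dbl: "sigma_struct ps A \<Longrightarrow> sigma_struct ps (dbl A as)"
  unfolding sigma_struct_def dbl_def by (fastforce)

lemma gedge_e0: "(x,y) \<in> gedge ps A \<Longrightarrow> (e0 x, e0 y) \<in> gedge ps (dbl A as)"
proof -
  assume "(x,y) \<in> gedge ps A"
  then obtain i t where "i < length ps" "t \<in> rels A i" "x \<in> set t" "y \<in> set t"
    unfolding gedge_def by auto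
  then show ?thesis unfolding gedge_def dbl_def
    by (auto intro!: exI[of _ i] bexI[of _ "map e0 t"])
qed

lemma gedge_e1: "(x,y) \<in> gedge ps A \<Longrightarrow> (e1 as x, e1 as y) \<in> gedge ps (dbl A as)"
proof -
  assume "(x,y) \<in> gedge ps A"
  then obtain i t where "i < length ps" "t \<in> rels A i" "x \<in> set t" "y \<in> set t"
    unfolding gedge_def by auto
  then show ?thesis unfolding gedge_def dbl_def
    by (auto intro!: exI[of _ i] bexI[of _ "map (e1 as) t"])
qed

lemma gedge_div: "(x,y) \<in> gedge ps (dbl A as) \<Longrightarrow> (x div 2, y div 2) \<in> gedge ps A"
  unfolding gedge_def dbl_def by fastforce


lemma ball_dbl:
  assumes "set as \<subseteq> univ A"
  shows "ball ps (dbl A as) d (map e0 as) = e0 ` ball ps A d as \<union> e1 as ` ball ps A d as"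
proof
  show "ball ps (dbl A as) d (map e0 as) \<subseteq> e0 ` ball ps A d as \<union> e1 as ` ball ps A d as"
  proof
    fix y assume y: "y \<in> ball ps (dbl A as) d (map e0 as)"
    then obtain a where a: "a \<in> set as" "within ps (dbl A as) d (e0 a) y"
      unfolding ball_def by auto
    have w: "within ps A d a (y div 2)"
      using within_map[of ps "dbl A as" "\<lambda>x. x div 2" A, OF gedge_div a(2)] by simp
    from y obtain x where x: "x \<in> univ A" "y = e0 x \<or> y = e1 as x"
      unfolding ball_def dbl_def by auto
    have "x \<in> ball ps A d as" using x w a(1) unfolding ball_def by auto
    then show "y \<in> e0 ` ball ps A d as \<union> e1 as ` ball ps A d as" using x by auto
  qed
next
  show "e0 ` ball ps A d as \<union> e1 as ` ball ps A d as \<subseteq> ball ps (dbl A as) d (map e0 as)"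
  proof
    fix y assume "y \<in> e0 ` ball ps A d as \<union> e1 as ` ball ps A d as"
    then obtain x where x: "x \<in> ball ps A d as" "y = e0 x \<or> y = e1 as x" by auto
    then obtain a where a: "a \<in> set as" "within ps A d a x" "x \<in> univ A"
      unfolding ball_def by auto
    have "within ps (dbl A as) d (e0 a) (e0 x)"
      using within_map[of ps A e0 "dbl A as", OF gedge_e0 a(2)] by simp
    moreover have "within ps (dbl A as) d (e1 as a) (e1 as x)"
      using within_map[of ps A "e1 as" "dbl A as", OF gedge_e1 a(2)] by simp
    ultimately show "y \<in> ball ps (dbl A as) d (map e0 as)"
      using x a unfolding ball_def by (auto simp: e1_as dbl_def)
  qed
qed


definition glue :: "nat set \<Rightarrow> (nat \<Rightarrow> nat) \<Rightarrow> (nat \<Rightarrow> nat) \<Rightarrow> nat \<Rightarrow> nat" where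
  "glue S u0 u1 = (\<lambda>y \<in> S. if even y then u0 (y div 2) else u1 (y div 2))"

lemma map_agree: "map u0 as = map u1 as \<Longrightarrow> x \<in> set as \<Longrightarrow> u0 x = u1 x"
  by (induction as) auto

lemma in_U0:
  assumes "set as \<subseteq> univ A" "e0 x \<in> ball ps (dbl A as) d (map e0 as)"
  shows "x \<in> ball ps A d as"
proof -
  from assms obtain y where "y \<in> ball ps A d as" "e0 x = e0 y \<or> e0 x = e1 as y"
    using ball_dbl[OF assms(1), of ps d] by auto
  then show ?thesis by (metis e0_div e1_div)
qed

lemma in_U1:
  assumes "set as \<subseteq> univ A" "e1 as x \<in> ball ps (dbl A as) d (map e0 as)"
  shows "x \<in> ball ps A d as"
proof -
  from assms obtain y where "y \<in> ball ps A d as" "e1 as x = e0 y \<or> e1 as x = e1 as y"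
    using ball_dbl[OF assms(1), of ps d] by auto
  then show ?thesis by (metis e0_div e1_div)
qed

lemma glue0:
  assumes "set as \<subseteq> univ A" "x \<in> ball ps A d as"
  shows "glue (ball ps (dbl A as) d (map e0 as)) u0 u1 (e0 x) = u0 x"
  using assms ball_dbl[OF assms(1), of ps d] by (simp add: glue_def)

lemma glue1:
  assumes "set as \<subseteq> univ A" "x \<in> ball ps A d as" "map u0 as = map u1 as"
  shows "glue (ball ps (dbl A as) d (map e0 as)) u0 u1 (e1 as x) = u1 x"
  using assms ball_dbl[OF assms(1), of ps d] map_agree[OF assms(3)] by (simp add: glue_def)

lemma cs_in_ball: "set as \<subseteq> univ A \<Longrightarrow> set as \<subseteq> ball ps A d as"
  unfolding ball_def within_def by force

lemma glue_hom:
  assumes as: "set as \<subseteq> univ A"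
    and h0: "is_hom (nbhd ps A d as) T u0" and h1: "is_hom (nbhd ps A d as) T u1"
  shows "is_hom (nbhd ps (dbl A as) d (map e0 as)) T (glue (ball ps (dbl A as) d (map e0 as)) u0 u1)"
proof -
  let ?U = "ball ps A d as" and ?BB = "ball ps (dbl A as) d (map e0 as)"
  let ?h = "glue ?BB u0 u1"
  have ag: "map u0 as = map u1 as" using h0 h1 unfolding is_hom_def nbhd_def by simp
  have u0f: "u0 \<in> ?U \<rightarrow>\<^sub>E univ T" and u1f: "u1 \<in> ?U \<rightarrow>\<^sub>E univ T"
    using h0 h1 unfolding is_hom_def nbhd_def by auto
  have "?h \<in> ?BB \<rightarrow>\<^sub>E univ T"
  proof
    fix y assume "y \<in> ?BB"
    then obtain x where "x \<in> ?U" "y = e0 x \<or> y = e1 as x" using ball_dbl[OF as] by auto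
    then show "?h y \<in> univ T" using glue0[OF as] glue1[OF as _ ag] u0f u1f by auto
  next
    fix y assume "y \<notin> ?BB" then show "?h y = undefined" by (simp add: glue_def)
  qed
  moreover have "\<forall>i. \<forall>t \<in> rels (nbhd ps (dbl A as) d (map e0 as)) i. map ?h t \<in> rels T i"
  proof (intro allI ballI)
    fix i t assume t: "t \<in> rels (nbhd ps (dbl A as) d (map e0 as)) i"
    then have tB: "set t \<subseteq> ?BB" and "t \<in> map e0 ` rels A i \<union> map (e1 as) ` rels A i"
      unfolding nbhd_def dbl_def by auto
    then obtain t' where t': "t' \<in> rels A i" "t = map e0 t' \<or> t = map (e1 as) t'" by auto
    show "map ?h t \<in> rels T i"
    proof (cases "t = map e0 t'")
      case True
      then have sub: "set t' \<subseteq> ?U" using tB in_U0[OF as] by auto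
      then have "t' \<in> rels (nbhd ps A d as) i" using t' unfolding nbhd_def by simp
      then have "map u0 t' \<in> rels T i" using h0 unfolding is_hom_def by blast
      moreover have "map ?h t = map u0 t'" using True sub glue0[OF as] by auto
      ultimately show ?thesis by simp
    next
      case False
      then have T: "t = map (e1 as) t'" using t' by auto
      then have sub: "set t' \<subseteq> ?U" using tB in_U1[OF as] by auto
      then have "t' \<in> rels (nbhd ps A d as) i" using t' unfolding nbhd_def by simp
      then have "map u1 t' \<in> rels T i" using h1 unfolding is_hom_def by blast
      moreover have "map ?h t = map u1 t'" using T sub glue1[OF as _ ag] by auto
      ultimately show ?thesis by simp
    qed
  qed
  moreover have "map ?h (map e0 as) = cs T"
  proof -
    have "map ?h (map e0 as) = map u0 as"
      using glue0[OF as] cs_in_ball[OF as, of ps d] by auto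
    moreover have "map u0 as = cs T" using h0 unfolding is_hom_def nbhd_def by simp
    ultimately show ?thesis by (rule trans)
  qed
  ultimately show ?thesis unfolding is_hom_def by (simp add: nbhd_def)
qed


lemma hom_ext: "is_hom S T u \<Longrightarrow> x \<notin> univ S \<Longrightarrow> u x = undefined"
  unfolding is_hom_def by (auto simp: PiE_def extensional_def)

lemma cmp_id_right: "is_hom (snd X) T u \<Longrightarrow> cmp X u (idm X) = u"
  unfolding cmp_def idm_def by (rule ext) (auto simp: hom_ext)

lemma cmp_idm_idm: "cmp X (idm X) (idm X) = idm X"
  unfolding cmp_def idm_def by auto

lemma nbhd_idm: "set as \<subseteq> univ A \<Longrightarrow> is_hom (nbhd ps A k as) (nbhd ps A k as) (\<lambda>x \<in> ball ps A k as. x)"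
  unfolding is_hom_def
proof (intro conjI allI ballI)
  assume "set as \<subseteq> univ A"
  then have "set as \<subseteq> ball ps A k as" by (rule cs_in_ball)
  then show "map (\<lambda>x \<in> ball ps A k as. x) (cs (nbhd ps A k as)) = cs (nbhd ps A k as)"
    by (auto simp: nbhd_def intro!: map_idI)
next
  fix i t assume "t \<in> rels (nbhd ps A k as) i"
  then show "map (\<lambda>x \<in> ball ps A k as. x) t \<in> rels (nbhd ps A k as) i"
    by (auto simp: nbhd_def map_idI subset_iff)
qed (auto simp: nbhd_def)

lemma Ob_idm: "Ob ps n d X \<Longrightarrow> Mor ps n d X X (idm X)"
proof -
  assume ob: "Ob ps n d X"
  have "is_hom (snd X) (snd X) (idm X)"
  proof (cases "fst X")
    case True
    then have "X = (True, Tterm n)" using ob unfolding Ob_def by auto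
    then show ?thesis unfolding is_hom_def idm_def Tterm_def by (auto intro!: map_idI)
  next
    case False
    then obtain k where "is_nbhd ps n k (snd X)" using ob unfolding Ob_def by auto
    then obtain A as where "set as \<subseteq> univ A" "snd X = nbhd ps A k as"
      unfolding is_nbhd_def by auto
    then show ?thesis using nbhd_idm[of as A ps k] unfolding idm_def by (simp add: nbhd_def)
  qed
  then show ?thesis using ob unfolding Mor_def by auto
qed

lemma Tterm_uniq:
  assumes "is_hom (Tterm n) E u" "is_hom (Tterm n) E u'"
  shows "u = u'"
proof
  fix x show "u x = u' x"
  proof (cases "x < n")
    case True
    have "map u [0..<n] = map u' [0..<n]" using assms unfolding is_hom_def Tterm_def by simp
    then show ?thesis using True by (simp add: map_eq_conv)
  next
    case False
    then show ?thesis using hom_ext[OF assms(1)] hom_ext[OF assms(2)] by (simp add: Tterm_def)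
  qed
qed

lemma case_a:
  assumes f: "Mor ps n d X Y f" and g: "Mor ps n d X Y g"
    and nb: "\<not> (\<not> fst X \<and> is_nbhd ps n d (snd X))"
  shows "left_homotopic ps n d X Y f g"
proof -
  have uq: "u = u'" if "Mor ps n d X E u" "Mor ps n d X E u'" for E u u'
  proof (cases "fst X")
    case True
    then have "X = (True, Tterm n)" using that unfolding Mor_def Ob_def by auto
    then show ?thesis using Tterm_uniq that unfolding Mor_def by auto
  next
    case False
    then show ?thesis using that nb unfolding Mor_def by auto
  qed
  have ob: "Ob ps n d X" using f unfolding Mor_def by auto
  have idX: "Mor ps n d X X (idm X)" using Ob_idm[OF ob] .
  have fg: "f = g" using uq f g by blast
  have pc: "pair_cofibration ps n d X X (idm X) (idm X)"
    unfolding pair_cofibration_def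
  proof (intro conjI idX allI impI)
    fix E P p u0 u1 v
    assume a: "retraction ps n d E P p \<and> Mor ps n d X E u0 \<and> Mor ps n d X E u1 \<and>
        Mor ps n d X P v \<and> cmp X p u0 = cmp X v (idm X) \<and> cmp X p u1 = cmp X v (idm X)"
    have "cmp X v (idm X) = v" using a cmp_id_right unfolding Mor_def by blast
    moreover have "cmp X u0 (idm X) = u0" using a cmp_id_right unfolding Mor_def by blast
    moreover have "u0 = u1" using a uq by blast
    ultimately show "\<exists>h. Mor ps n d X E h \<and> cmp X h (idm X) = u0 \<and> cmp X h (idm X) = u1 \<and>
        cmp X p h = v" using a by auto
  qed
  have we: "weq ps n d X X (idm X)" unfolding weq_def using idX by auto
  have "cmp X f (idm X) = f" using f cmp_id_right unfolding Mor_def by blast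
  then show ?thesis unfolding left_homotopic_def using f g fg pc we cmp_idm_idm
    by metis
qed


lemma mor_tgt: "Mor ps n d X E u \<Longrightarrow> \<not> fst X \<Longrightarrow> \<not> fst E \<and> Ob ps n d E \<and> is_hom (snd X) (snd E) u"
  unfolding Mor_def by auto

lemma mor_out: "Ob ps n d X \<Longrightarrow> Ob ps n d E \<Longrightarrow> \<not> fst X \<Longrightarrow> \<not> fst E \<Longrightarrow>
   is_nbhd ps n d (snd X) \<Longrightarrow> is_hom (snd X) (snd E) u \<Longrightarrow> Mor ps n d X E u"
  unfolding Mor_def Ob_def by auto

lemma case_b:
  assumes A: "sigma_struct ps A" "length as = n" and as: "set as \<subseteq> univ A"
    and X: "X = (False, nbhd ps A d as)"
    and f: "Mor ps n d X Y f" and g: "Mor ps n d X Y g"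
  shows "left_homotopic ps n d X Y f g"
proof -
  define U where "U = ball ps A d as"
  define BB where "BB = ball ps (dbl A as) d (map e0 as)"
  define C where "C = (False, nbhd ps (dbl A as) d (map e0 as))"
  define i0 where "i0 = (\<lambda>x \<in> U. e0 x)"
  define i1 where "i1 = (\<lambda>x \<in> U. e1 as x)"
  have BBeq: "BB = e0 ` U \<union> e1 as ` U" unfolding BB_def U_def using ball_dbl[OF as] .
  have nbX: "is_nbhd ps n d (snd X)" unfolding is_nbhd_def using A as X by auto
  have nbC: "is_nbhd ps n d (snd C)" unfolding is_nbhd_def C_def
    using A as sigma_dbl[OF A(1)] by (auto intro!: exI[of _ "dbl A as"] exI[of _ "map e0 as"] simp: dbl_def subset_iff)
  have obX: "Ob ps n d X" using nbX X unfolding Ob_def by auto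
  have obC: "Ob ps n d C" using nbC unfolding Ob_def C_def by auto
  have uX: "univ (snd X) = U" unfolding X U_def nbhd_def by simp
  have uC: "univ (snd C) = BB" unfolding C_def BB_def nbhd_def by simp
  have gh: "is_hom (snd C) T (glue BB u0 u1)"
    if "is_hom (snd X) T u0" "is_hom (snd X) T u1" for T u0 u1
    using glue_hom[OF as, of ps d T u0 u1] that unfolding X C_def BB_def by simp
  have gc0: "cmp X (glue BB u0 u1) i0 = u0" if "is_hom (snd X) T u0" for T u0 u1
  proof
    fix x show "cmp X (glue BB u0 u1) i0 x = u0 x"
      using glue0[OF as, of x ps d u0 u1] hom_ext[OF that, of x]
      unfolding cmp_def uX i0_def BB_def U_def by auto
  qed
  have gc1: "cmp X (glue BB u0 u1) i1 = u1" if "is_hom (snd X) T u1" "map u0 as = map u1 as" for T u0 u1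
  proof
    fix x show "cmp X (glue BB u0 u1) i1 x = u1 x"
      using glue1[OF as, of x ps d u0 u1] hom_ext[OF that(1), of x] that(2)
      unfolding cmp_def uX i1_def BB_def U_def by auto
  qed
  have csX: "cs (snd X) = as" unfolding X nbhd_def by simp
  have csC: "cs (snd C) = map e0 as" unfolding C_def nbhd_def by simp
  have agree: "map u0 as = map u1 as" if "is_hom (snd X) T u0" "is_hom (snd X) T u1" for T u0 u1
    using that csX unfolding is_hom_def by simp
  have asU: "set as \<subseteq> U" unfolding U_def using cs_in_ball[OF as] .
  have hi0: "is_hom (snd X) (snd C) i0" unfolding is_hom_def
  proof (intro conjI allI ballI)
    show "i0 \<in> univ (snd X) \<rightarrow>\<^sub>E univ (snd C)" unfolding uX uC BBeq i0_def by auto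
  next
    fix i t assume "t \<in> rels (snd X) i"
    then have t: "t \<in> rels A i" "set t \<subseteq> U" unfolding X nbhd_def U_def by auto
    have eq: "map i0 t = map e0 t" using t(2) by (auto simp: i0_def)
    have r: "map e0 t \<in> rels (dbl A as) i" using t(1) by (simp add: dbl_def)
    have b: "set (map e0 t) \<subseteq> BB" using t(2) BBeq by auto
    show "map i0 t \<in> rels (snd C) i" unfolding eq C_def nbhd_def BB_def[symmetric] using r b by simp
  next
    show "map i0 (cs (snd X)) = cs (snd C)" unfolding csX csC i0_def using asU by auto
  qed
  have hi1: "is_hom (snd X) (snd C) i1" unfolding is_hom_def
  proof (intro conjI allI ballI)
    show "i1 \<in> univ (snd X) \<rightarrow>\<^sub>E univ (snd C)" unfolding uX uC BBeq i1_def by auto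
  next
    fix i t assume "t \<in> rels (snd X) i"
    then have t: "t \<in> rels A i" "set t \<subseteq> U" unfolding X nbhd_def U_def by auto
    have eq: "map i1 t = map (e1 as) t" using t(2) by (auto simp: i1_def)
    have r: "map (e1 as) t \<in> rels (dbl A as) i" using t(1) by (simp add: dbl_def)
    have b: "set (map (e1 as) t) \<subseteq> BB" using t(2) BBeq by auto
    show "map i1 t \<in> rels (snd C) i" unfolding eq C_def nbhd_def BB_def[symmetric] using r b by simp
  next
    show "map i1 (cs (snd X)) = cs (snd C)" unfolding csX csC i1_def using asU by (auto simp: e1_as)
  qed
  have Mi0: "Mor ps n d X C i0" using mor_out[OF obX obC _ _ nbX hi0] X C_def by simp
  have Mi1: "Mor ps n d X C i1" using mor_out[OF obX obC _ _ nbX hi1] X C_def by simp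
  have idh: "is_hom (snd X) (snd X) (idm X)" using Ob_idm[OF obX] unfolding Mor_def by simp
  define sm where "sm = glue BB (idm X) (idm X)"
  have hs: "is_hom (snd C) (snd X) sm" unfolding sm_def using gh[OF idh idh] .
  have Ms: "Mor ps n d C X sm" using mor_out[OF obC obX _ _ nbC hs] X C_def by simp
  have we: "weq ps n d C X sm" unfolding weq_def using Ms Mi0 by auto
  have s0: "cmp X sm i0 = idm X" unfolding sm_def using gc0[OF idh] .
  have s1: "cmp X sm i1 = idm X" unfolding sm_def using gc1[OF idh] by simp
  have fY: "\<not> fst Y \<and> Ob ps n d Y \<and> is_hom (snd X) (snd Y) f" using mor_tgt[OF f] X by simp
  have gY: "is_hom (snd X) (snd Y) g" using mor_tgt[OF g] X by simp
  have hH: "is_hom (snd C) (snd Y) (glue BB f g)" using gh fY gY by blast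
  have MH: "Mor ps n d C Y (glue BB f g)" using mor_out[OF obC _ _ _ nbC hH] fY C_def by simp
  have H0: "cmp X (glue BB f g) i0 = f" using gc0 fY by blast
  have H1: "cmp X (glue BB f g) i1 = g" using gc1[OF gY agree[OF _ gY]] fY by blast
  have pc: "pair_cofibration ps n d X C i0 i1"
    unfolding pair_cofibration_def
  proof (intro conjI Mi0 Mi1 allI impI)
    fix E P p u0 u1 v
    assume a: "retraction ps n d E P p \<and> Mor ps n d X E u0 \<and> Mor ps n d X E u1 \<and>
        Mor ps n d C P v \<and> cmp X p u0 = cmp X v i0 \<and> cmp X p u1 = cmp X v i1"
    have e0: "\<not> fst E \<and> Ob ps n d E \<and> is_hom (snd X) (snd E) u0" using mor_tgt[of ps n d X E u0] a X by simp
    have e1: "is_hom (snd X) (snd E) u1" using mor_tgt[of ps n d X E u1] a X by simp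
    have ag: "map u0 as = map u1 as" using agree e0 e1 by blast
    have hh: "is_hom (snd C) (snd E) (glue BB u0 u1)" using gh e0 e1 by blast
    have Mh: "Mor ps n d C E (glue BB u0 u1)" using mor_out[OF obC _ _ _ nbC hh] e0 C_def by simp
    have hv: "is_hom (snd C) (snd P) v" using a unfolding Mor_def by simp
    have "cmp C p (glue BB u0 u1) = v"
    proof
      fix y show "cmp C p (glue BB u0 u1) y = v y"
      proof (cases "y \<in> BB")
        case True
        then obtain x where x: "x \<in> U" "y = e0 x \<or> y = e1 as x" using BBeq by auto
        show ?thesis
        proof (cases "y = e0 x")
          case True
          have "cmp X p u0 x = cmp X v i0 x" using a by simp
          then show ?thesis using True x \<open>y \<in> BB\<close> glue0[OF as, of x ps d u0 u1]
            unfolding cmp_def uC uX i0_def U_def BB_def by simp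
        next
          case False
          then have y: "y = e1 as x" using x by simp
          have "cmp X p u1 x = cmp X v i1 x" using a by simp
          then show ?thesis using y x \<open>y \<in> BB\<close> glue1[OF as, of x ps d u0 u1] ag
            unfolding cmp_def uC uX i1_def U_def BB_def by simp
        qed
      next
        case False
        then show ?thesis using hom_ext[OF hv, of y] unfolding cmp_def uC by simp
      qed
    qed
    then show "\<exists>h. Mor ps n d C E h \<and> cmp X h i0 = u0 \<and> cmp X h i1 = u1 \<and> cmp C p h = v"
      using Mh gc0[OF conjunct2[OF conjunct2[OF e0]]] gc1[OF e1 ag] by blast
  qed
  show ?thesis unfolding left_homotopic_def
    using f g pc we s0 s1 MH H0 H1 by blast
qed


theorem proposition10:
  fixes ps :: "nat list" and n d :: nat and X Y :: obj and f g :: "nat \<Rightarrow> nat"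
  assumes "Mor ps n d X Y f" and "Mor ps n d X Y g"
  shows "left_homotopic ps n d X Y f g"
proof (cases "\<not> fst X \<and> is_nbhd ps n d (snd X)")
  case True
  then obtain A as where A: "sigma_struct ps A" "length as = n" "set as \<subseteq> univ A"
    "snd X = nbhd ps A d as" unfolding is_nbhd_def by auto
  then have "X = (False, nbhd ps A d as)" using True by (metis prod.collapse)
  then show ?thesis using case_b[OF A(1-3)] assms by blast
next
  case False
  then show ?thesis using case_a assms by blast
qed

end
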